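(* Let $S\subset\mathbf R^4$ be an oriented immersed surface and let $\Gamma=(\Gamma_1,\Gamma_2):S\to \mathbf S^2\times\mathbf S^2$ be its Gauss map in sphere (Klein) coordinates. Then $S$ is congruent (i.e. mapped by a rigid motion of $\mathbf R^4$, a composition of a translation and an orthogonal linear map) to a Lagrangean surface of $(\mathbf R^4,\omega)$, $\omega=\mathrm dx\wedge \mathrm du+\mathrm dy\wedge\mathrm dv$, if and only if the image of $\Gamma_1$ or the image of $\Gamma_2$ is contained in a great circle of $\mathbf S^2$.
   Context: Coordinates on $\mathbf R^4$ are $(x,y,u,v)$ with standard orthonormal basis $e_1,e_2,e_3,e_4$. A Lagrangean surface of $(\mathbf R^4,\omega)$ is an immersed surface $L$ with $i^*\omega\equiv 0$, $i$ the immersion. For an oriented plane $P$ spanned by an oriented orthonormal pair $v_1=\sum c_ie_i$, $v_2=\sum d_ie_i$, its Plücker coordinates are $p_{ij}=c_id_j-c_jd_i$, so that $P=(p_{12},p_{13},p_{14},p_{34},p_{42},p_{23})\in\mathbf S^5\subset\mathbf R^6$ (note $p_{42}=-p_{24}$). Its Klein (sphere) coordinates are $a=(p_{12}+p_{34},\,p_{13}+p_{42},\,p_{14}+p_{23})$ and $b=(p_{12}-p_{34},\,p_{13}-p_{42},\,p_{14}-p_{23})$, both unit vectors in $\mathbf R^3$, giving $G_{2,4}\cong\mathbf S^2\times\mathbf S^2$. The Gauss map sends $p\in S$ to the oriented tangent plane $T_pS$ (translated to the origin); $\Gamma_1(p)=a(T_pS)$, $\Gamma_2(p)=b(T_pS)$.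 A great circle of $\mathbf S^2$ is its intersection with a plane through the origin. *)

theory Defs
  imports "HOL-Analysis.Analysis"
begin

text \<open>Coordinates on R^4: (x,y,u,v) = components 1,2,3,4.
  Surfaces are given by parametrisations (charts) f :: real^2 => real^4 on open sets.\<close>

definition e1 :: "real^2" where "e1 = axis 1 1"
definition e2 :: "real^2" where "e2 = axis 2 1"

definition immersion_on :: "(real^2) set \<Rightarrow> (real^2 \<Rightarrow> real^4) \<Rightarrow> bool" where
  "immersion_on U f \<longleftrightarrow>
     (\<forall>p\<in>U. f differentiable (at p) \<and> inj (frechet_derivative f (at p)))"

definition omega :: "real^4 \<Rightarrow> real^4 \<Rightarrow> real" where
  "omega a b = a$1 * b$3 - a$3 * b$1 + a$2 * b$4 - a$4 * b$2"

definition lagrangean_on :: "(real^2) set \<Rightarrow> (real^2 \<Rightarrow> real^4) \<Rightarrow> bool" where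
  "lagrangean_on U f \<longleftrightarrow>
     (\<forall>p\<in>U. \<forall>s t. omega (frechet_derivative f (at p) s) (frechet_derivative f (at p) t) = 0)"

definition gs1 :: "real^4 \<Rightarrow> real^4 \<Rightarrow> real^4" where
  "gs1 w1 w2 = (1 / norm w1) *\<^sub>R w1"
definition gs2 :: "real^4 \<Rightarrow> real^4 \<Rightarrow> real^4" where
  "gs2 w1 w2 = (let u = w2 - (w2 \<bullet> gs1 w1 w2) *\<^sub>R gs1 w1 w2 in (1 / norm u) *\<^sub>R u)"

definition pl :: "4 \<Rightarrow> 4 \<Rightarrow> real^4 \<Rightarrow> real^4 \<Rightarrow> real" where
  "pl i j c d = c$i * d$j - c$j * d$i"

definition klein_a :: "real^4 \<Rightarrow> real^4 \<Rightarrow> real^3" where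
  "klein_a c d = vector [pl 1 2 c d + pl 3 4 c d, pl 1 3 c d + pl 4 2 c d, pl 1 4 c d + pl 2 3 c d]"
definition klein_b :: "real^4 \<Rightarrow> real^4 \<Rightarrow> real^3" where
  "klein_b c d = vector [pl 1 2 c d - pl 3 4 c d, pl 1 3 c d - pl 4 2 c d, pl 1 4 c d - pl 2 3 c d]"

text \<open>Gauss map in sphere coordinates: tangent plane oriented by (Df e1, Df e2).\<close>
definition Gamma1 :: "(real^2 \<Rightarrow> real^4) \<Rightarrow> real^2 \<Rightarrow> real^3" where
  "Gamma1 f p = (let w1 = frechet_derivative f (at p) e1; w2 = frechet_derivative f (at p) e2
                 in klein_a (gs1 w1 w2) (gs2 w1 w2))"
definition Gamma2 :: "(real^2 \<Rightarrow> real^4) \<Rightarrow> real^2 \<Rightarrow> real^3" where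
  "Gamma2 f p = (let w1 = frechet_derivative f (at p) e1; w2 = frechet_derivative f (at p) e2
                 in klein_b (gs1 w1 w2) (gs2 w1 w2))"

definition great_circle :: "real^3 \<Rightarrow> (real^3) set" where
  "great_circle n = {z. norm z = 1 \<and> n \<bullet> z = 0}"

end

theory Submission
  imports Defs
begin


lemma alg_key:
  fixes m12 m13 m14 m23 m24 m34 :: real
  assumes d1: "m12*m12+m13*m13+m14*m14 = 1"
    and d2: "m12*m12+m23*m23+m24*m24 = 1"
    and d3: "m13*m13+m23*m23+m34*m34 = 1"
    and d4: "m14*m14+m24*m24+m34*m34 = 1"
    and o12: "m13*m23 + m14*m24 = 0"
    and o13: "m12*m23 - m14*m34 = 0"
    and o14: "m12*m24 + m13*m34 = 0"
    and o23: "m12*m13 + m24*m34 = 0"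
    and o24: "m12*m14 - m23*m34 = 0"
    and o34: "m13*m14 + m23*m24 = 0"
  shows "((m12+m34 = 0 \<and> m13-m24 = 0 \<and> m14+m23 = 0) \<or> (m12-m34 = 0 \<and> m13+m24 = 0 \<and> m14-m23 = 0))
       \<and> \<not> ((m12+m34 = 0 \<and> m13-m24 = 0 \<and> m14+m23 = 0) \<and> (m12-m34 = 0 \<and> m13+m24 = 0 \<and> m14-m23 = 0))"
proof -
  define a1 where "a1 = m12+m34" define a2 where "a2 = m13-m24" define a3 where "a3 = m14+m23"
  define b1 where "b1 = m12-m34" define b2 where "b2 = m13+m24" define b3 where "b3 = m14-m23"
  have p: "a1*b1 = 0" "a1*b2=0" "a1*b3=0" "a2*b1=0" "a2*b2=0" "a2*b3=0" "a3*b1=0" "a3*b2=0" "a3*b3=0"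
    unfolding a1_def a2_def a3_def b1_def b2_def b3_def using assms by (simp_all add: algebra_simps; linarith)+
  have nz: "\<not> (a1=0 \<and> a2=0 \<and> a3=0 \<and> b1=0 \<and> b2=0 \<and> b3=0)"
  proof
    assume "a1=0 \<and> a2=0 \<and> a3=0 \<and> b1=0 \<and> b2=0 \<and> b3=0"
    then have "m12 = 0" "m13 = 0" "m14 = 0" unfolding a1_def a2_def a3_def b1_def b2_def b3_def by linarith+
    with d1 show False by simp
  qed
  have "(a1=0 \<and> a2=0 \<and> a3=0) \<or> (b1=0 \<and> b2=0 \<and> b3=0)"
    using p by auto
  with nz show ?thesis unfolding a1_def a2_def a3_def b1_def b2_def b3_def by auto
qed



definition Jm :: "real^4^4" where
  "Jm = (\<chi> i j. if (i=1 \<and> j=3) \<or> (i=2 \<and> j=4) then 1 else if (i=3 \<and> j=1) \<or> (i=4 \<and> j=2) then -1 else 0)"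

lemma omega_Jm: "omega x y = x \<bullet> (Jm *v y)"
  by (simp add: omega_def inner_vec_def matrix_vector_mult_def sum_4 Jm_def algebra_simps)

lemma Jm2: "Jm ** Jm = - mat 1"
  by (simp add: vec_eq_iff forall_4 matrix_matrix_mult_def sum_4 mat_def Jm_def)

lemma Jmt: "transpose Jm = - Jm"
  by (simp add: vec_eq_iff forall_4 transpose_def Jm_def)

lemma inner_mv: "(A *v x) \<bullet> (z::real^'n) = x \<bullet> (transpose A *v z)"
  by (metis dot_lmul_matrix inner_commute transpose_matrix_vector)

lemma mneg_l: "(- B) ** C = - (B ** (C::real^'n^'n))"
  by (simp add: matrix_matrix_mult_def vec_eq_iff sum_negf)
lemma mneg_r: "B ** (- C) = - (B ** (C::real^'n^'n))"
  by (simp add: matrix_matrix_mult_def vec_eq_iff sum_negf)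
lemma transpose_neg': "transpose (- B) = - transpose (B::real^'n^'n)"
  by (simp add: transpose_def vec_eq_iff)

lemma orth_M:
  fixes Q :: "real^4 \<Rightarrow> real^4"
  assumes "orthogonal_transformation Q"
  defines "M \<equiv> transpose (matrix Q) ** Jm ** matrix Q"
  shows "\<And>x y. omega (Q x) (Q y) = x \<bullet> (M *v y)"
    and "M ** M = - mat 1" and "transpose M = - M"
proof -
  let ?A = "matrix Q"
  have lin: "linear Q" and om: "orthogonal_matrix ?A"
    using assms(1) orthogonal_transformation_matrix by blast+
  have QA: "Q z = ?A *v z" for z using lin by (simp add: matrix_works linear_linear)
  show "omega (Q x) (Q y) = x \<bullet> (M *v y)" for x y
    by (simp add: omega_Jm QA inner_mv M_def matrix_vector_mul_assoc matrix_mul_assoc)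
  have 1: "?A ** transpose ?A = mat 1" "transpose ?A ** ?A = mat 1"
    using om by (auto simp: orthogonal_matrix_def)
  have "M ** M = transpose ?A ** Jm ** (?A ** transpose ?A) ** Jm ** ?A"
    by (simp add: M_def matrix_mul_assoc)
  also have "\<dots> = transpose ?A ** (Jm ** Jm) ** ?A" by (simp add: 1 matrix_mul_assoc)
  also have "\<dots> = - mat 1" by (simp add: Jm2 mneg_l mneg_r 1)
  finally show "M ** M = - mat 1" .
  show "transpose M = - M"
    by (simp add: M_def matrix_transpose_mul Jmt mneg_l mneg_r matrix_mul_assoc)
qed

lemma vec3_eq0: "(vector [a,b,c] :: real^3) = 0 \<longleftrightarrow> a = 0 \<and> b = 0 \<and> c = 0"
  by (simp add: vec_eq_iff forall_3)

lemma orth_ab: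
  fixes Q :: "real^4 \<Rightarrow> real^4"
  assumes "orthogonal_transformation Q"
  shows "\<exists>\<alpha> \<beta>. (\<alpha> = 0 \<or> \<beta> = 0) \<and> \<not> (\<alpha> = 0 \<and> \<beta> = 0) \<and>
     (\<forall>x y. omega (Q x) (Q y) = \<alpha> \<bullet> klein_a x y + \<beta> \<bullet> klein_b x y)"
proof -
  define M where "M \<equiv> transpose (matrix Q) ** Jm ** matrix Q"
  note R = orth_M[OF assms, folded M_def]
  have as: "M$j$i = - M$i$j" for i j
  proof -
    have "(transpose M)$i$j = (-M)$i$j" using R(3) by simp
    thus ?thesis by (simp add: transpose_def)
  qed
  have d: "M$i$i = 0" for i using as[of i i] by simp
  have sq: "(\<Sum>k\<in>UNIV. M$i$k * M$k$j) = (if i = j then -1 else 0)" for i j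
    using arg_cong[OF R(2), of "\<lambda>X. X$i$j"] by (simp add: matrix_matrix_mult_def mat_def)
  define m12 where "m12 = M$1$2"  define m13 where "m13 = M$1$3" define m14 where "m14 = M$1$4"
  define m23 where "m23 = M$2$3"  define m24 where "m24 = M$2$4" define m34 where "m34 = M$3$4"
  have e: "M$2$1 = -m12" "M$3$1 = -m13" "M$4$1 = -m14" "M$3$2 = -m23" "M$4$2 = -m24" "M$4$3 = -m34"
    unfolding m12_def m13_def m14_def m23_def m24_def m34_def
    using as[of 1 2] as[of 1 3] as[of 1 4] as[of 2 3] as[of 2 4] as[of 3 4] by simp_all
  have q: "\<And>i j. (\<Sum>k\<in>UNIV. M$i$k * M$k$j) = (if i = j then -1 else 0)" by (rule sq)
  have eqs: "m12*m12+m13*m13+m14*m14 = 1" "m12*m12+m23*m23+m24*m24 = 1"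
    "m13*m13+m23*m23+m34*m34 = 1" "m14*m14+m24*m24+m34*m34 = 1"
    "m13*m23 + m14*m24 = 0" "m12*m23 - m14*m34 = 0" "m12*m24 + m13*m34 = 0"
    "m12*m13 + m24*m34 = 0" "m12*m14 - m23*m34 = 0" "m13*m14 + m23*m24 = 0"
    using q[of 1 1] q[of 2 2] q[of 3 3] q[of 4 4] q[of 1 2] q[of 1 3] q[of 1 4] q[of 2 3] q[of 2 4] q[of 3 4]
    by (simp_all add: sum_4 d e m12_def[symmetric] m13_def[symmetric] m14_def[symmetric]
          m23_def[symmetric] m24_def[symmetric] m34_def[symmetric]; linarith)+
  define \<alpha> where "\<alpha> = (vector [(m12+m34)/2, (m13-m24)/2, (m14+m23)/2] :: real^3)"
  define \<beta> where "\<beta> = (vector [(m12-m34)/2, (m13+m24)/2, (m14-m23)/2] :: real^3)"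
  have K: "(\<alpha> = 0 \<or> \<beta> = 0) \<and> \<not> (\<alpha> = 0 \<and> \<beta> = 0)"
    using alg_key[OF eqs] unfolding \<alpha>_def \<beta>_def vec3_eq0 by auto
  have F: "omega (Q x) (Q y) = \<alpha> \<bullet> klein_a x y + \<beta> \<bullet> klein_b x y" for x y
    unfolding R(1)
    by (simp add: inner_vec_def matrix_vector_mult_def sum_4 sum_3 d e \<alpha>_def \<beta>_def klein_a_def klein_b_def pl_def
          m12_def[symmetric] m13_def[symmetric] m14_def[symmetric]
          m23_def[symmetric] m24_def[symmetric] m34_def[symmetric] field_simps)
  show ?thesis using K F by blast
qed



lemma vector_4 [simp]:
 "(vector [x,y,z,w] ::('a::zero)^4)$1 = x"
 "(vector [x,y,z,w] ::('a::zero)^4)$2 = y"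
 "(vector [x,y,z,w] ::('a::zero)^4)$3 = z"
 "(vector [x,y,z,w] ::('a::zero)^4)$4 = w"
  unfolding vector_def by simp_all

definition Rq :: "real \<Rightarrow> real \<Rightarrow> real \<Rightarrow> real^4 \<Rightarrow> real^4" where
  "Rq b c d x = vector [- b*x$2 - c*x$3 - d*x$4, b*x$1 + d*x$3 - c*x$4, c*x$1 - d*x$2 + b*x$4, d*x$1 + c*x$2 - b*x$3]"

lemma Rq_linear: "linear (\<lambda>x. k *\<^sub>R Rq b c d x)"
  by (rule linearI) (simp_all add: Rq_def vec_eq_iff forall_4 algebra_simps)

lemma Rq_inner: "Rq b c d x \<bullet> Rq b c d y = (b*b+c*c+d*d) * (x \<bullet> y)"
  by (simp add: Rq_def inner_vec_def sum_4 algebra_simps)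

lemma Rq_omega: "omega (Rq b c d x) (Rq b c d y) =
   vector [2*c*b, 2*c*c - (b*b+c*c+d*d), 2*c*d] \<bullet> klein_b x y"
  by (simp add: Rq_def omega_def klein_b_def pl_def inner_vec_def sum_3 algebra_simps)

lemma omega_b2: "omega x y = klein_b x y $ 2"
  by (simp add: omega_def klein_b_def pl_def algebra_simps)

lemma construct_b:
  fixes n :: "real^3"
  assumes "n \<noteq> 0"
  shows "\<exists>Q. orthogonal_transformation Q \<and> (\<exists>l. l \<noteq> 0 \<and> (\<forall>x y. omega (Q x) (Q y) = l * (n \<bullet> klein_b x y)))"
proof -
  define r where "r = norm n"
  have r2: "r*r = n$1*n$1 + n$2*n$2 + n$3*n$3"
    using power2_norm_eq_inner[of n] by (simp add: r_def inner_vec_def sum_3 power2_eq_square)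
  show ?thesis
  proof (cases "n$2 + r = 0")
    case True
    have "n$2 = - r" using True by linarith
    then have "n$1*n$1 + n$3*n$3 = 0" using r2 by simp
    then have "n$1 = 0" "n$3 = 0" by (simp_all add: sum_squares_eq_zero_iff)
    then have n2: "n$2 \<noteq> 0" using assms by (metis exhaust_3 vec_eq_iff zero_index)
    have "omega x y = (1 / n$2) * (n \<bullet> klein_b x y)" for x y
      using n2 `n$1 = 0` `n$3 = 0` by (simp add: omega_b2 inner_vec_def sum_3)
    then show ?thesis using n2
      by (intro exI[of _ "\<lambda>x. x"] conjI orthogonal_transformation_id exI[of _ "1 / n$2"]) auto
  next
    case False
    define c where "c = n$2 + r"
    define N where "N = n$1*n$1 + c*c + n$3*n$3"
    have cz: "c \<noteq> 0" using False c_def by simp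
    have "c*c > 0" using cz by (auto simp: zero_less_mult_iff linorder_neq_iff)
    moreover have "n$1*n$1 \<ge> 0" "n$3*n$3 \<ge> 0" by simp_all
    ultimately have Npos: "N > 0" unfolding N_def by linarith
    define Q where "Q = (\<lambda>x. (1 / sqrt N) *\<^sub>R Rq (n$1) c (n$3) x)"
    have "sqrt N * sqrt N = N" using Npos by simp
    then have sq: "(1 / sqrt N) * (1 / sqrt N) = 1 / N" by (metis times_divide_times_eq mult_1)
    have orth: "orthogonal_transformation Q"
      unfolding orthogonal_transformation_def Q_def
      using Npos sq by (simp add: Rq_linear Rq_inner N_def[symmetric] mult.assoc[symmetric])
    have bl: "omega (a *\<^sub>R x) (a *\<^sub>R y) = (a*a) * omega x y" for a x y
      by (simp add: omega_def algebra_simps)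
    have key: "vector [2*c*n$1, 2*c*c - N, 2*c*n$3] = (2*c) *\<^sub>R n"
      using r2 unfolding N_def c_def by (simp add: vec_eq_iff forall_3 algebra_simps)
    have "omega (Q x) (Q y) = (2*c/N) * (n \<bullet> klein_b x y)" for x y
      unfolding Q_def bl Rq_omega sq N_def[symmetric] key by simp
    then show ?thesis using orth cz Npos by (intro exI[of _ Q] conjI exI[of _ "2*c/N"]) auto
  qed
qed

definition Sf :: "real^4 \<Rightarrow> real^4" where "Sf x = vector [x$1, x$2, x$3, - x$4]"

lemma Sf_orth: "orthogonal_transformation Sf"
  unfolding orthogonal_transformation_def
  by (auto intro!: linearI simp: Sf_def vec_eq_iff forall_4 inner_vec_def sum_4)

lemma Sf_klein: "klein_b (Sf x) (Sf y) = vector [klein_a x y $1, klein_a x y $2, - klein_a x y $3]"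
  by (simp add: Sf_def klein_a_def klein_b_def pl_def vec_eq_iff forall_3 algebra_simps)

lemma construct_a:
  fixes n :: "real^3"
  assumes "n \<noteq> 0"
  shows "\<exists>Q. orthogonal_transformation Q \<and> (\<exists>l. l \<noteq> 0 \<and> (\<forall>x y. omega (Q x) (Q y) = l * (n \<bullet> klein_a x y)))"
proof -
  define n' where "n' = (vector [n$1, n$2, - n$3] :: real^3)"
  have "n' \<noteq> 0" using assms unfolding n'_def by (simp add: vec_eq_iff forall_3)
  from construct_b[OF this] obtain Q l where Q: "orthogonal_transformation Q" "l \<noteq> 0"
    "\<And>x y. omega (Q x) (Q y) = l * (n' \<bullet> klein_b x y)" by blast
  have "omega ((Q \<circ> Sf) x) ((Q \<circ> Sf) y) = l * (n \<bullet> klein_a x y)" for x y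
    by (simp add: Q(3) Sf_klein n'_def inner_vec_def sum_3)
  then show ?thesis using Q orthogonal_transformation_compose[OF Q(1) Sf_orth] by blast
qed



lemma klein_a_norm2: "(norm (klein_a c d))^2 = (c \<bullet> c) * (d \<bullet> d) - (c \<bullet> d)^2"
  unfolding power2_norm_eq_inner by (simp add: inner_vec_def sum_3 sum_4 klein_a_def pl_def power2_eq_square algebra_simps)
lemma klein_b_norm2: "(norm (klein_b c d))^2 = (c \<bullet> c) * (d \<bullet> d) - (c \<bullet> d)^2"
  unfolding power2_norm_eq_inner by (simp add: inner_vec_def sum_3 sum_4 klein_b_def pl_def power2_eq_square algebra_simps)

lemma klein_lin:
  "klein_a (r *\<^sub>R x) y = r *\<^sub>R klein_a x y" "klein_a x (r *\<^sub>R y) = r *\<^sub>R klein_a x y"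
  "klein_a x (y - z) = klein_a x y - klein_a x z" "klein_a x x = 0"
  "klein_b (r *\<^sub>R x) y = r *\<^sub>R klein_b x y" "klein_b x (r *\<^sub>R y) = r *\<^sub>R klein_b x y"
  "klein_b x (y - z) = klein_b x y - klein_b x z" "klein_b x x = 0"
  by (simp_all add: klein_a_def klein_b_def pl_def vec_eq_iff forall_3 algebra_simps)

lemma norm1_of_orthonormal:
  assumes "norm c = 1" "norm d = 1" "c \<bullet> d = 0"
  shows "norm (klein_a c d) = 1" "norm (klein_b c d) = 1"
proof -
  have cc: "c \<bullet> c = 1" "d \<bullet> d = 1" using assms by (simp_all add: power2_norm_eq_inner[symmetric])
  have "(norm (klein_a c d))^2 = 1" "(norm (klein_b c d))^2 = 1"
    using klein_a_norm2 klein_b_norm2 cc assms(3) by simp_all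
  then show "norm (klein_a c d) = 1" "norm (klein_b c d) = 1"
    by (simp_all add: power2_eq_1_iff norm_ge_zero) (smt (verit) norm_ge_zero)+
qed

lemma gs_props:
  fixes w1 w2 :: "real^4"
  assumes w1: "w1 \<noteq> 0" and u: "w2 - (w2 \<bullet> gs1 w1 w2) *\<^sub>R gs1 w1 w2 \<noteq> 0"
  shows "\<exists>k>0. klein_a (gs1 w1 w2) (gs2 w1 w2) = k *\<^sub>R klein_a w1 w2
             \<and> klein_b (gs1 w1 w2) (gs2 w1 w2) = k *\<^sub>R klein_b w1 w2"
    and "norm (klein_a (gs1 w1 w2) (gs2 w1 w2)) = 1" "norm (klein_b (gs1 w1 w2) (gs2 w1 w2)) = 1"
proof -
  define g1 where "g1 = gs1 w1 w2"
  define u where "u = w2 - (w2 \<bullet> g1) *\<^sub>R g1"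
  have g1: "g1 = (1 / norm w1) *\<^sub>R w1" unfolding g1_def gs1_def by simp
  have g2: "gs2 w1 w2 = (1 / norm u) *\<^sub>R u" unfolding gs2_def u_def g1_def Let_def by simp
  have uz: "u \<noteq> 0" using u unfolding u_def g1_def .
  have n1: "norm g1 = 1" using w1 by (simp add: g1)
  have n2: "norm (gs2 w1 w2) = 1" using uz by (simp add: g2)
  have "g1 \<bullet> g1 = 1" using n1 by (simp add: power2_norm_eq_inner[symmetric])
  then have "g1 \<bullet> u = 0" unfolding u_def by (simp add: inner_diff_right inner_commute)
  then have o: "g1 \<bullet> gs2 w1 w2 = 0" by (simp add: g2)
  show "norm (klein_a (gs1 w1 w2) (gs2 w1 w2)) = 1" "norm (klein_b (gs1 w1 w2) (gs2 w1 w2)) = 1"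
    using norm1_of_orthonormal[OF n1 n2 o] unfolding g1_def by simp_all
  define k where "k = (1 / norm w1) * (1 / norm u)"
  have kp: "k > 0" using w1 uz by (simp add: k_def)
  have "klein_a (gs1 w1 w2) (gs2 w1 w2) = k *\<^sub>R klein_a w1 w2
             \<and> klein_b (gs1 w1 w2) (gs2 w1 w2) = k *\<^sub>R klein_b w1 w2"
  proof -
    have "klein_a w1 u = klein_a w1 w2" "klein_b w1 u = klein_b w1 w2"
      unfolding u_def g1 by (simp_all add: klein_lin)
    then show ?thesis unfolding g1_def[symmetric] g2 by (simp add: g1 klein_lin k_def)
  qed
  with kp show "\<exists>k>0. klein_a (gs1 w1 w2) (gs2 w1 w2) = k *\<^sub>R klein_a w1 w2
             \<and> klein_b (gs1 w1 w2) (gs2 w1 w2) = k *\<^sub>R klein_b w1 w2" by blast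
qed

lemma vec2_decomp: "(s::real^2) = s$1 *\<^sub>R e1 + s$2 *\<^sub>R e2"
  by (simp add: vec_eq_iff forall_2 e1_def e2_def axis_def)

lemma imm_facts:
  assumes "immersion_on U f" "p \<in> U"
  defines "D \<equiv> frechet_derivative f (at p)"
  shows "(f has_derivative D) (at p)" "linear D" "D e1 \<noteq> 0"
    "D e2 - (D e2 \<bullet> gs1 (D e1) (D e2)) *\<^sub>R gs1 (D e1) (D e2) \<noteq> 0"
proof -
  have dif: "f differentiable (at p)" and inj: "inj D" using assms unfolding immersion_on_def by auto
  show hd: "(f has_derivative D) (at p)" using dif unfolding D_def by (simp add: frechet_derivative_works)
  then show lin: "linear D" using has_derivative_linear by blast
  have "e1 \<noteq> 0" by (simp add: e1_def)
  then show "D e1 \<noteq> 0" using inj lin by (metis injD linear_0)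
  define s where "s = (D e2 \<bullet> gs1 (D e1) (D e2)) / norm (D e1)"
  have "D e2 - (D e2 \<bullet> gs1 (D e1) (D e2)) *\<^sub>R gs1 (D e1) (D e2) = D (e2 - s *\<^sub>R e1)"
    using lin by (simp add: gs1_def s_def linear_diff linear_cmul)
  moreover have "e2 - s *\<^sub>R e1 \<noteq> 0"
    by (simp add: vec_eq_iff forall_2 e1_def e2_def axis_def) 
  ultimately show "D e2 - (D e2 \<bullet> gs1 (D e1) (D e2)) *\<^sub>R gs1 (D e1) (D e2) \<noteq> 0"
    using inj lin by (metis injD linear_0)
qed

lemma gc_iff:
  assumes "immersion_on U f" "p \<in> U"
  defines "D \<equiv> frechet_derivative f (at p)"
  shows "Gamma1 f p \<in> great_circle n \<longleftrightarrow> n \<bullet> klein_a (D e1) (D e2) = 0"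
    and "Gamma2 f p \<in> great_circle n \<longleftrightarrow> n \<bullet> klein_b (D e1) (D e2) = 0"
proof -
  note I = imm_facts[OF assms(1,2), folded D_def]
  obtain k where k: "k > 0" "klein_a (gs1 (D e1) (D e2)) (gs2 (D e1) (D e2)) = k *\<^sub>R klein_a (D e1) (D e2)"
    "klein_b (gs1 (D e1) (D e2)) (gs2 (D e1) (D e2)) = k *\<^sub>R klein_b (D e1) (D e2)"
    using gs_props(1)[OF I(3) I(4)] by blast
  note N = gs_props(2,3)[OF I(3) I(4)]
  show "Gamma1 f p \<in> great_circle n \<longleftrightarrow> n \<bullet> klein_a (D e1) (D e2) = 0"
    using N k unfolding Gamma1_def great_circle_def Let_def D_def[symmetric] by auto
  show "Gamma2 f p \<in> great_circle n \<longleftrightarrow> n \<bullet> klein_b (D e1) (D e2) = 0"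
    using N k unfolding Gamma2_def great_circle_def Let_def D_def[symmetric] by auto
qed

lemma omega_comb: "omega (a *\<^sub>R u + b *\<^sub>R v) (c *\<^sub>R u + d *\<^sub>R v) = (a*d - b*c) * omega u v"
  by (simp add: omega_def algebra_simps)

lemma lag_iff:
  assumes "linear Q" "immersion_on U f"
  shows "lagrangean_on U (\<lambda>x. Q (f x) + c) \<longleftrightarrow>
    (\<forall>p\<in>U. omega (Q (frechet_derivative f (at p) e1)) (Q (frechet_derivative f (at p) e2)) = 0)"
proof -
  have bl: "bounded_linear Q" using assms(1) by (simp add: linear_conv_bounded_linear)
  have fd: "frechet_derivative (\<lambda>x. Q (f x) + c) (at p) = (\<lambda>h. Q (frechet_derivative f (at p) h))"
    if "p \<in> U" for p
  proof -
    have "(f has_derivative frechet_derivative f (at p)) (at p)" using imm_facts(1)[OF assms(2) that] .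
    then have "((\<lambda>x. Q (f x)) has_derivative (\<lambda>h. Q (frechet_derivative f (at p) h))) (at p)"
      using bounded_linear.has_derivative[OF bl] by blast
    then have "((\<lambda>x. Q (f x) + c) has_derivative (\<lambda>h. Q (frechet_derivative f (at p) h))) (at p)"
      by (rule has_derivative_add_const)
    then show ?thesis by (metis frechet_derivative_at)
  qed
  have L: "omega (Q (frechet_derivative f (at p) s)) (Q (frechet_derivative f (at p) t))
     = (s$1 * t$2 - s$2 * t$1) * omega (Q (frechet_derivative f (at p) e1)) (Q (frechet_derivative f (at p) e2))"
    if "p \<in> U" for p s t
  proof -
    have lin: "linear (\<lambda>h. Q (frechet_derivative f (at p) h))"
      using imm_facts(2)[OF assms(2) that] assms(1) linear_compose[unfolded o_def] by blast
    have "Q (frechet_derivative f (at p) z) = z$1 *\<^sub>R Q (frechet_derivative f (at p) e1) + z$2 *\<^sub>R Q (frechet_derivative f (at p) e2)" for z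
    proof -
      have "Q (frechet_derivative f (at p) z) = Q (frechet_derivative f (at p) (z$1 *\<^sub>R e1 + z$2 *\<^sub>R e2))"
        by (rule arg_cong[where f="\<lambda>z. Q (frechet_derivative f (at p) z)", OF vec2_decomp])
      also have "\<dots> = z$1 *\<^sub>R Q (frechet_derivative f (at p) e1) + z$2 *\<^sub>R Q (frechet_derivative f (at p) e2)"
        by (simp only: linear_add[OF lin] linear_cmul[OF lin])
      finally show ?thesis .
    qed
    note E = this
    show ?thesis by (simp only: E[of s] E[of t] omega_comb)
  qed
  show ?thesis
  proof
    assume "lagrangean_on U (\<lambda>x. Q (f x) + c)"
    then have H: "\<And>p s t. p \<in> U \<Longrightarrow> omega (frechet_derivative (\<lambda>x. Q (f x) + c) (at p) s) (frechet_derivative (\<lambda>x. Q (f x) + c) (at p) t) = 0"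
      unfolding lagrangean_on_def by blast
    show "\<forall>p\<in>U. omega (Q (frechet_derivative f (at p) e1)) (Q (frechet_derivative f (at p) e2)) = 0"
    proof
      fix p assume p: "p \<in> U"
      show "omega (Q (frechet_derivative f (at p) e1)) (Q (frechet_derivative f (at p) e2)) = 0"
        using H[OF p, of e1 e2] unfolding fd[OF p] .
    qed
  next
    assume "\<forall>p\<in>U. omega (Q (frechet_derivative f (at p) e1)) (Q (frechet_derivative f (at p) e2)) = 0"
    then show "lagrangean_on U (\<lambda>x. Q (f x) + c)"
      unfolding lagrangean_on_def
    proof (intro ballI allI)
      fix p s t assume p: "p \<in> U"
      show "omega (frechet_derivative (\<lambda>x. Q (f x) + c) (at p) s) (frechet_derivative (\<lambda>x. Q (f x) + c) (at p) t) = 0"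
      proof -
        have "omega (Q (frechet_derivative f (at p) e1)) (Q (frechet_derivative f (at p) e2)) = 0"
          using \<open>\<forall>p\<in>U. _\<close> p by blast
        then show ?thesis unfolding fd[OF p] by (simp only: L[OF p, of s t] mult_zero_right)
      qed
    qed
  qed
qed




theorem mainTheorem1:
  fixes f :: "'i \<Rightarrow> real^2 \<Rightarrow> real^4" and U :: "'i \<Rightarrow> (real^2) set"
  assumes "\<forall>i. open (U i)"
    and "\<forall>i. immersion_on (U i) (f i)"
  shows "(\<exists>Q c. orthogonal_transformation Q \<and>
            (\<forall>i. lagrangean_on (U i) (\<lambda>x. Q (f i x) + c)))
         \<longleftrightarrow>
         ((\<exists>n. n \<noteq> 0 \<and> (\<forall>i. \<forall>p\<in>U i. Gamma1 (f i) p \<in> great_circle n)) \<or>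
          (\<exists>n. n \<noteq> 0 \<and> (\<forall>i. \<forall>p\<in>U i. Gamma2 (f i) p \<in> great_circle n)))"
proof
  assume "\<exists>Q c. orthogonal_transformation Q \<and> (\<forall>i. lagrangean_on (U i) (\<lambda>x. Q (f i x) + c))"
  then obtain Q c where Q: "orthogonal_transformation Q"
    and lag: "\<And>i. lagrangean_on (U i) (\<lambda>x. Q (f i x) + c)" by blast
  have lin: "linear Q" using Q by (simp add: orthogonal_transformation_def)
  have Z: "omega (Q (frechet_derivative (f i) (at p) e1)) (Q (frechet_derivative (f i) (at p) e2)) = 0"
    if "p \<in> U i" for i p
    using lag_iff[OF lin assms(2)[rule_format, of i], of c] lag[of i] that by blast
  obtain \<alpha> \<beta> where ab: "\<alpha> = 0 \<or> \<beta> = 0" "\<not> (\<alpha> = 0 \<and> \<beta> = 0)"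
    and F: "\<And>x y. omega (Q x) (Q y) = \<alpha> \<bullet> klein_a x y + \<beta> \<bullet> klein_b x y"
    using orth_ab[OF Q] by blast
  show "(\<exists>n. n \<noteq> 0 \<and> (\<forall>i. \<forall>p\<in>U i. Gamma1 (f i) p \<in> great_circle n)) \<or>
          (\<exists>n. n \<noteq> 0 \<and> (\<forall>i. \<forall>p\<in>U i. Gamma2 (f i) p \<in> great_circle n))"
  proof (cases "\<beta> = 0")
    case True
    then have "\<alpha> \<noteq> 0" using ab by blast
    moreover have "\<forall>i. \<forall>p\<in>U i. Gamma1 (f i) p \<in> great_circle \<alpha>"
    proof (intro allI ballI)
      fix i p assume p: "p \<in> U i"
      show "Gamma1 (f i) p \<in> great_circle \<alpha>"
        unfolding gc_iff(1)[OF assms(2)[rule_format, of i] p]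
        using Z[OF p] F True by simp
    qed
    ultimately show ?thesis by blast
  next
    case False
    then have "\<alpha> = 0" using ab by blast
    moreover have "\<forall>i. \<forall>p\<in>U i. Gamma2 (f i) p \<in> great_circle \<beta>"
    proof (intro allI ballI)
      fix i p assume p: "p \<in> U i"
      show "Gamma2 (f i) p \<in> great_circle \<beta>"
        unfolding gc_iff(2)[OF assms(2)[rule_format, of i] p]
        using Z[OF p] F \<open>\<alpha> = 0\<close> by simp
    qed
    ultimately show ?thesis using False by blast
  qed
next
  assume "(\<exists>n. n \<noteq> 0 \<and> (\<forall>i. \<forall>p\<in>U i. Gamma1 (f i) p \<in> great_circle n)) \<or>
          (\<exists>n. n \<noteq> 0 \<and> (\<forall>i. \<forall>p\<in>U i. Gamma2 (f i) p \<in> great_circle n))"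
  then show "\<exists>Q c. orthogonal_transformation Q \<and> (\<forall>i. lagrangean_on (U i) (\<lambda>x. Q (f i x) + c))"
  proof
    assume "\<exists>n. n \<noteq> 0 \<and> (\<forall>i. \<forall>p\<in>U i. Gamma1 (f i) p \<in> great_circle n)"
    then obtain n where n: "n \<noteq> 0" and G: "\<And>i p. p \<in> U i \<Longrightarrow> Gamma1 (f i) p \<in> great_circle n" by blast
    obtain Q l where Q: "orthogonal_transformation Q" and l: "\<And>x y. omega (Q x) (Q y) = l * (n \<bullet> klein_a x y)"
      using construct_a[OF n] by blast
    have lin: "linear Q" using Q by (simp add: orthogonal_transformation_def)
    have "lagrangean_on (U i) (\<lambda>x. Q (f i x) + 0)" for i
      unfolding lag_iff[OF lin assms(2)[rule_format, of i]]
    proof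
      fix p assume p: "p \<in> U i"
      show "omega (Q (frechet_derivative (f i) (at p) e1)) (Q (frechet_derivative (f i) (at p) e2)) = 0"
        using G[OF p] unfolding gc_iff(1)[OF assms(2)[rule_format, of i] p] l by simp
    qed
    then show ?thesis using Q by blast
  next
    assume "\<exists>n. n \<noteq> 0 \<and> (\<forall>i. \<forall>p\<in>U i. Gamma2 (f i) p \<in> great_circle n)"
    then obtain n where n: "n \<noteq> 0" and G: "\<And>i p. p \<in> U i \<Longrightarrow> Gamma2 (f i) p \<in> great_circle n" by blast
    obtain Q l where Q: "orthogonal_transformation Q" and l: "\<And>x y. omega (Q x) (Q y) = l * (n \<bullet> klein_b x y)"
      using construct_b[OF n] by blast
    have lin: "linear Q" using Q by (simp add: orthogonal_transformation_def)
    have "lagrangean_on (U i) (\<lambda>x. Q (f i x) + 0)" for i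
      unfolding lag_iff[OF lin assms(2)[rule_format, of i]]
    proof
      fix p assume p: "p \<in> U i"
      show "omega (Q (frechet_derivative (f i) (at p) e1)) (Q (frechet_derivative (f i) (at p) e2)) = 0"
        using G[OF p] unfolding gc_iff(2)[OF assms(2)[rule_format, of i] p] l by simp
    qed
    then show ?thesis using Q by blast
  qed
qed

end
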